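(* Deciding whether a normal finitely recursive program $P$ skeptically entails a ground formula $F$ is r.e.-hard.
   Context: A normal program is a finite set of rules $A\leftarrow L_1,\dots,L_n$ ($n\ge0$), $A$ an atom, $L_i$ atoms or negated atoms $\mathtt{not}\,B$, possibly with function symbols. $\mathsf{Ground}(P)$ is its ground instantiation. For a set $M$ of ground atoms, $P^M$ is obtained from $\mathsf{Ground}(P)$ by deleting rules having some $\mathtt{not}\,B$ in the body with $B\in M$ and deleting negative literals from the remaining rules; $M$ is a stable model iff $M$ is the least Herbrand model of $P^M$. A ground formula is a closed propositional combination of ground atoms; $P$ skeptically entails $F$ iff $F$ is true in every stable model of $P$. The dependency graph has ground atoms as vertices and an edge $A\to B$ whenever some $r\in\mathsf{Ground}(P)$ has head $A$ and $B$ occurring in its body; $A$ depends on $B$ if there is a directed path from $A$ to $B$ (every atom depends on itself). $P$ is finitely recursive iff each ground atom depends on finitely many ground atoms. r.e.-hard means every recursively enumerable set is many-one reducible to the set of pairs $(P,F)$ with $P$ normal finitely recursive skeptically entailing $F$. *)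

theory Defs
  imports Main "HOL-Library.Nat_Bijection"
begin

datatype recf = Zero | Succ | Proj nat | Comp recf "recf list" | Prim recf recf | Mn recf

inductive eval :: "recf \<Rightarrow> nat list \<Rightarrow> nat \<Rightarrow> bool" where
  eval_Zero: "eval Zero xs 0"
| eval_Succ: "eval Succ (x # xs) (Suc x)"
| eval_Proj: "i < length xs \<Longrightarrow> eval (Proj i) xs (xs ! i)"
| eval_Comp: "list_all2 (\<lambda>g y. eval g xs y) gs ys \<Longrightarrow> eval f ys z \<Longrightarrow> eval (Comp f gs) xs z"
| eval_Prim0: "eval f xs y \<Longrightarrow> eval (Prim f g) (0 # xs) y"
| eval_PrimS: "eval (Prim f g) (n # xs) y \<Longrightarrow> eval g (n # y # xs) z \<Longrightarrow> eval (Prim f g) (Suc n # xs) z"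
| eval_Mn: "eval f (y # xs) 0 \<Longrightarrow> (\<forall>z<y. \<exists>v. eval f (z # xs) v \<and> 0 < v) \<Longrightarrow> eval (Mn f) xs y"

definition computable :: "(nat \<Rightarrow> nat) \<Rightarrow> bool" where
  "computable f \<longleftrightarrow> (\<exists>r. \<forall>x. eval r [x] (f x))"

definition rec_enum :: "nat set \<Rightarrow> bool" where
  "rec_enum A \<longleftrightarrow> (\<exists>r. \<forall>x. x \<in> A \<longleftrightarrow> (\<exists>y. eval r [x] y))"

datatype "term" = Var nat | Fn nat "term list"

datatype atom = Atom nat "term list"

datatype lit = Pos atom | Neg atom

datatype rule = Rule atom "lit list"

type_synonym program = "rule list"

datatype fmla = FAtom atom | FTrue | FFalse | FNot fmla | FAnd fmla fmla | FOr fmla fmla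
  | FImp fmla fmla | FIff fmla fmla

fun head :: "rule \<Rightarrow> atom" where "head (Rule h b) = h"
fun body :: "rule \<Rightarrow> lit list" where "body (Rule h b) = b"
fun lit_atom :: "lit \<Rightarrow> atom" where "lit_atom (Pos a) = a" | "lit_atom (Neg a) = a"

fun term_funs :: "term \<Rightarrow> (nat \<times> nat) set" where
  "term_funs (Var x) = {}"
| "term_funs (Fn f ts) = insert (f, length ts) (\<Union>t\<in>set ts. term_funs t)"

fun atom_funs :: "atom \<Rightarrow> (nat \<times> nat) set" where
  "atom_funs (Atom p ts) = (\<Union>t\<in>set ts. term_funs t)"

fun rule_funs :: "rule \<Rightarrow> (nat \<times> nat) set" where
  "rule_funs (Rule h b) = atom_funs h \<union> (\<Union>l\<in>set b. atom_funs (lit_atom l))"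

text \<open>Function symbols (with arities) of the language of P; as usual, if P contains no
  constant an arbitrary constant (symbol 0) is added.\<close>
definition signature :: "program \<Rightarrow> (nat \<times> nat) set" where
  "signature P = (let S = (\<Union>r\<in>set P. rule_funs r) in
     if (\<exists>c. (c, 0) \<in> S) then S else insert (0, 0) S)"

inductive_set herbrand_universe :: "program \<Rightarrow> term set" for P where
  "(f, length ts) \<in> signature P \<Longrightarrow> (\<forall>t\<in>set ts. t \<in> herbrand_universe P)
     \<Longrightarrow> Fn f ts \<in> herbrand_universe P"

fun subst_term :: "(nat \<Rightarrow> term) \<Rightarrow> term \<Rightarrow> term" where
  "subst_term \<sigma> (Var x) = \<sigma> x"
| "subst_term \<sigma> (Fn f ts) = Fn f (map (subst_term \<sigma>) ts)"

fun subst_atom :: "(nat \<Rightarrow> term) \<Rightarrow> atom \<Rightarrow> atom" where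
  "subst_atom \<sigma> (Atom p ts) = Atom p (map (subst_term \<sigma>) ts)"

fun subst_lit :: "(nat \<Rightarrow> term) \<Rightarrow> lit \<Rightarrow> lit" where
  "subst_lit \<sigma> (Pos a) = Pos (subst_atom \<sigma> a)"
| "subst_lit \<sigma> (Neg a) = Neg (subst_atom \<sigma> a)"

fun subst_rule :: "(nat \<Rightarrow> term) \<Rightarrow> rule \<Rightarrow> rule" where
  "subst_rule \<sigma> (Rule h b) = Rule (subst_atom \<sigma> h) (map (subst_lit \<sigma>) b)"

definition Ground :: "program \<Rightarrow> rule set" where
  "Ground P = {subst_rule \<sigma> r | \<sigma> r. r \<in> set P \<and> (\<forall>x. \<sigma> x \<in> herbrand_universe P)}"

fun ground_term :: "term \<Rightarrow> bool" where
  "ground_term (Var x) = False"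
| "ground_term (Fn f ts) = (\<forall>t\<in>set ts. ground_term t)"

fun ground_atom :: "atom \<Rightarrow> bool" where
  "ground_atom (Atom p ts) = (\<forall>t\<in>set ts. ground_term t)"

text \<open>Gelfond-Lifschitz reduct P^M: a set of definite ground rules (head, positive body).\<close>
definition reduct :: "program \<Rightarrow> atom set \<Rightarrow> (atom \<times> atom list) set" where
  "reduct P M = {(h, [a. Pos a \<leftarrow> b]) | h b. Rule h b \<in> Ground P \<and> (\<forall>a. Neg a \<in> set b \<longrightarrow> a \<notin> M)}"

inductive_set least_model :: "(atom \<times> atom list) set \<Rightarrow> atom set" for R where
  "(h, bs) \<in> R \<Longrightarrow> (\<forall>b\<in>set bs. b \<in> least_model R) \<Longrightarrow> h \<in> least_model R"

definition stable_model :: "program \<Rightarrow> atom set \<Rightarrow> bool" where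
  "stable_model P M \<longleftrightarrow> (\<forall>a\<in>M. ground_atom a) \<and> M = least_model (reduct P M)"

fun fmla_atoms :: "fmla \<Rightarrow> atom set" where
  "fmla_atoms (FAtom a) = {a}"
| "fmla_atoms FTrue = {}"
| "fmla_atoms FFalse = {}"
| "fmla_atoms (FNot F) = fmla_atoms F"
| "fmla_atoms (FAnd F G) = fmla_atoms F \<union> fmla_atoms G"
| "fmla_atoms (FOr F G) = fmla_atoms F \<union> fmla_atoms G"
| "fmla_atoms (FImp F G) = fmla_atoms F \<union> fmla_atoms G"
| "fmla_atoms (FIff F G) = fmla_atoms F \<union> fmla_atoms G"

definition ground_fmla :: "fmla \<Rightarrow> bool" where
  "ground_fmla F \<longleftrightarrow> (\<forall>a\<in>fmla_atoms F. ground_atom a)"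

fun holds :: "atom set \<Rightarrow> fmla \<Rightarrow> bool" where
  "holds M (FAtom a) = (a \<in> M)"
| "holds M FTrue = True"
| "holds M FFalse = False"
| "holds M (FNot F) = (\<not> holds M F)"
| "holds M (FAnd F G) = (holds M F \<and> holds M G)"
| "holds M (FOr F G) = (holds M F \<or> holds M G)"
| "holds M (FImp F G) = (holds M F \<longrightarrow> holds M G)"
| "holds M (FIff F G) = (holds M F \<longleftrightarrow> holds M G)"

definition skeptically_entails :: "program \<Rightarrow> fmla \<Rightarrow> bool" where
  "skeptically_entails P F \<longleftrightarrow> (\<forall>M. stable_model P M \<longrightarrow> holds M F)"

definition dep_edges :: "program \<Rightarrow> (atom \<times> atom) set" where
  "dep_edges P = {(head r, lit_atom l) | r l. r \<in> Ground P \<and> l \<in> set (body r)}"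

definition finitely_recursive :: "program \<Rightarrow> bool" where
  "finitely_recursive P \<longleftrightarrow> (\<forall>A. ground_atom A \<longrightarrow> finite {B. (A, B) \<in> (dep_edges P)\<^sup>*})"

fun enc_term :: "term \<Rightarrow> nat" where
  "enc_term (Var x) = prod_encode (0, x)"
| "enc_term (Fn f ts) = prod_encode (1, prod_encode (f, list_encode (map enc_term ts)))"

fun enc_atom :: "atom \<Rightarrow> nat" where
  "enc_atom (Atom p ts) = prod_encode (p, list_encode (map enc_term ts))"

fun enc_lit :: "lit \<Rightarrow> nat" where
  "enc_lit (Pos a) = prod_encode (0, enc_atom a)"
| "enc_lit (Neg a) = prod_encode (1, enc_atom a)"

fun enc_rule :: "rule \<Rightarrow> nat" where
  "enc_rule (Rule h b) = prod_encode (enc_atom h, list_encode (map enc_lit b))"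

definition enc_program :: "program \<Rightarrow> nat" where
  "enc_program P = list_encode (map enc_rule P)"

fun enc_fmla :: "fmla \<Rightarrow> nat" where
  "enc_fmla (FAtom a) = prod_encode (0, enc_atom a)"
| "enc_fmla FTrue = prod_encode (1, 0)"
| "enc_fmla FFalse = prod_encode (2, 0)"
| "enc_fmla (FNot F) = prod_encode (3, enc_fmla F)"
| "enc_fmla (FAnd F G) = prod_encode (4, prod_encode (enc_fmla F, enc_fmla G))"
| "enc_fmla (FOr F G) = prod_encode (5, prod_encode (enc_fmla F, enc_fmla G))"
| "enc_fmla (FImp F G) = prod_encode (6, prod_encode (enc_fmla F, enc_fmla G))"
| "enc_fmla (FIff F G) = prod_encode (7, prod_encode (enc_fmla F, enc_fmla G))"

definition enc_instance :: "program \<times> fmla \<Rightarrow> nat" where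
  "enc_instance PF = prod_encode (enc_program (fst PF), enc_fmla (snd PF))"

definition SkepFR :: "(program \<times> fmla) set" where
  "SkepFR = {(P, F). finitely_recursive P \<and> ground_fmla F \<and> skeptically_entails P F}"

definition many_one_reducible :: "nat set \<Rightarrow> (program \<times> fmla) set \<Rightarrow> bool" where
  "many_one_reducible A B \<longleftrightarrow>
     (\<exists>f. computable (enc_instance \<circ> f) \<and> (\<forall>x. x \<in> A \<longleftrightarrow> f x \<in> B))"

end

theory Submission imports Defs begin

fun cst :: "nat \<Rightarrow> recf" where
  "cst 0 = Zero" | "cst (Suc k) = Comp Succ [cst k]"

lemma eval_cst: "eval (cst k) xs k"
  by (induction k) (auto intro: eval.intros)

definition Add :: recf where "Add = Prim (Proj 0) (Comp Succ [Proj 1])"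

lemma eval_Add: "eval Add [a, b] (a + b)"
proof (induction a)
  case 0 then show ?case unfolding Add_def using eval_Prim0[of "Proj 0" "[b]" b] eval_Proj[of 0 "[b]"] by auto
next
  case (Suc a)
  have "eval (Comp Succ [Proj 1]) [a, a+b, b] (Suc (a+b))"
    by (rule eval_Comp[where ys="[a+b]"]) (auto intro: eval.intros eval_Proj[of 1 "[a, a+b, b]", simplified])
  then show ?case using Suc unfolding Add_def by (auto intro: eval_PrimS)
qed

definition Tri :: recf where "Tri = Prim Zero (Comp Succ [Comp Add [Proj 1, Proj 0]])"

lemma eval_Tri: "eval Tri [n] (triangle n)"
proof (induction n)
  case 0 then show ?case unfolding Tri_def by (auto intro: eval.intros)
next
  case (Suc n)
  have "eval (Comp Add [Proj 1, Proj 0]) [n, triangle n] (triangle n + n)"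
    by (rule eval_Comp[where ys="[triangle n, n]"]) (auto intro: eval_Add eval_Proj[of 1 "[n, triangle n]", simplified] eval_Proj[of 0 "[n, triangle n]", simplified])
  then have "eval (Comp Succ [Comp Add [Proj 1, Proj 0]]) [n, triangle n] (triangle (Suc n))"
    by (intro eval_Comp[where ys="[triangle n + n]"]) (auto intro: eval.intros)
  then show ?case using Suc unfolding Tri_def by (auto intro: eval_PrimS)
qed

definition PE :: "recf \<Rightarrow> recf \<Rightarrow> recf" where
  "PE f g = Comp Add [Comp Tri [Comp Add [f, g]], f]"

lemma eval_PE: "eval f xs a \<Longrightarrow> eval g xs b \<Longrightarrow> eval (PE f g) xs (prod_encode (a, b))"
proof -
  assume f: "eval f xs a" and g: "eval g xs b"
  have 1: "eval (Comp Add [f, g]) xs (a+b)"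
    by (rule eval_Comp[where ys="[a,b]"]) (use f g eval_Add in auto)
  have 2: "eval (Comp Tri [Comp Add [f, g]]) xs (triangle (a+b))"
    by (rule eval_Comp[where ys="[a+b]"]) (use 1 eval_Tri in auto)
  show ?thesis unfolding PE_def prod_encode_def
    by (simp, rule eval_Comp[where ys="[triangle (a+b), a]"]) (use 2 f eval_Add in auto)
qed

lemma eval_Suc1: "eval f xs a \<Longrightarrow> eval (Comp Succ [f]) xs (Suc a)"
  by (auto intro!: eval_Comp[where ys="[a]"] intro: eval.intros)

lemma eval_Proj0: "eval (Proj 0) [x] x" using eval_Proj[of 0 "[x]"] by simp

fun num :: "nat \<Rightarrow> term" where
  "num 0 = Fn 0 []" | "num (Suc n) = Fn 11 [num n]"

fun tlist :: "term list \<Rightarrow> term" where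
  "tlist [] = Fn 2 []" | "tlist (t # ts) = Fn 3 [t, tlist ts]"

fun code :: "recf \<Rightarrow> term" where
  "code Zero = Fn 4 []"
| "code Succ = Fn 5 []"
| "code (Proj i) = Fn 6 [num i]"
| "code (Comp f gs) = Fn 7 [code f, tlist (map code gs)]"
| "code (Prim f g) = Fn 8 [code f, code g]"
| "code (Mn f) = Fn 9 [code f]"

abbreviation "V \<equiv> Var"
abbreviation "Z0 \<equiv> Fn 0 []"
abbreviation "sT t \<equiv> Fn 11 [t]"
abbreviation "NIL \<equiv> Fn 2 []"
abbreviation "CONS a b \<equiv> Fn 3 [a, b]"
abbreviation "node a b c \<equiv> Fn 10 [a, b, c]"
abbreviation "ev a b c d \<equiv> Atom 0 [a, b, c, d]"
abbreviation "evs a b c d \<equiv> Atom 6 [a, b, c, d]"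
abbreviation "nth3 a b c \<equiv> Atom 2 [a, b, c]"
abbreviation "below a b c d \<equiv> Atom 3 [a, b, c, d]"
abbreviation "start a \<equiv> Atom 4 [a]"
abbreviation "pk a b c d \<equiv> Atom 5 [a, b, c, d]"

text \<open>Variables: F=0,G=1,XS=2,Y=3,Z=4,W=5,W1=6,W2=7,N=8,I=9,X=10,GS=11,YS=12,VV=13\<close>

definition Drules :: "rule list" where
  "Drules = [
    Rule (ev (Fn 4 []) (V 2) Z0 NIL) [],
    Rule (ev (Fn 5 []) (CONS (V 10) (V 2)) (sT (V 10)) NIL) [],
    Rule (ev (Fn 6 [V 9]) (V 2) (V 13) NIL) [Pos (nth3 (V 9) (V 2) (V 13))],
    Rule (nth3 Z0 (CONS (V 10) (V 2)) (V 10)) [],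
    Rule (nth3 (sT (V 9)) (CONS (V 10) (V 2)) (V 13)) [Pos (nth3 (V 9) (V 2) (V 13))],
    Rule (ev (Fn 7 [V 0, V 11]) (V 2) (V 4) (node (V 12) (V 6) (V 7)))
      [Pos (evs (V 11) (V 2) (V 12) (V 6)), Pos (ev (V 0) (V 12) (V 4) (V 7))],
    Rule (evs NIL (V 2) NIL NIL) [],
    Rule (evs (CONS (V 1) (V 11)) (V 2) (CONS (V 3) (V 12)) (node (V 6) (V 7) NIL))
      [Pos (ev (V 1) (V 2) (V 3) (V 6)), Pos (evs (V 11) (V 2) (V 12) (V 7))],
    Rule (ev (Fn 8 [V 0, V 1]) (CONS Z0 (V 2)) (V 3) (V 5)) [Pos (ev (V 0) (V 2) (V 3) (V 5))],
    Rule (ev (Fn 8 [V 0, V 1]) (CONS (sT (V 8)) (V 2)) (V 4)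
          (node (CONS (V 8) (V 2)) (CONS (V 8) (CONS (V 3) (V 2))) (node (V 6) (V 7) NIL)))
      [Pos (ev (Fn 8 [V 0, V 1]) (CONS (V 8) (V 2)) (V 3) (V 6)),
       Pos (ev (V 1) (CONS (V 8) (CONS (V 3) (V 2))) (V 4) (V 7))],
    Rule (ev (Fn 9 [V 0]) (V 2) (V 3) (node (CONS (V 3) (V 2)) Z0 (node (V 6) (V 7) NIL)))
      [Pos (ev (V 0) (CONS (V 3) (V 2)) Z0 (V 6)), Pos (below (V 0) (V 2) (V 3) (V 7))],
    Rule (below (V 0) (V 2) Z0 NIL) [],
    Rule (below (V 0) (V 2) (sT (V 8)) (node (CONS (V 8) (V 2)) (sT (V 13)) (node (V 6) (V 7) NIL)))
      [Pos (below (V 0) (V 2) (V 8) (V 6)), Pos (ev (V 0) (CONS (V 8) (V 2)) (sT (V 13)) (V 7))]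
  ]"

definition constr :: "recf \<Rightarrow> rule" where
  "constr r = Rule (pk (code r) (CONS (V 10) NIL) (V 3) (V 5))
     [Pos (start (V 10)), Pos (ev (code r) (CONS (V 10) NIL) (V 3) (V 5)),
      Neg (pk (code r) (CONS (V 10) NIL) (V 3) (V 5))]"

definition Prog :: "recf \<Rightarrow> nat \<Rightarrow> program" where
  "Prog r x = Rule (start (num x)) [] # Drules @ [constr r]"

definition Gnum :: recf where
  "Gnum = Prim (cst (prod_encode (1, prod_encode (0, 0))))
     (PE (cst 1) (PE (cst 11) (Comp Succ [PE (Proj 1) (cst 0)])))"

lemma eval_Gnum: "eval Gnum [n] (enc_term (num n))"
proof (induction n)
  case 0 then show ?case unfolding Gnum_def by (auto intro!: eval_Prim0 eval_cst)
next
  case (Suc n)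
  have "eval (PE (Proj 1) (cst 0)) [n, enc_term (num n)] (prod_encode (enc_term (num n), 0))"
    by (rule eval_PE) (auto intro: eval_cst eval_Zero eval_Proj[of 1 "[n, enc_term (num n)]", simplified])
  then have "eval (PE (cst 1) (PE (cst 11) (Comp Succ [PE (Proj 1) (cst 0)]))) [n, enc_term (num n)]
     (enc_term (num (Suc n)))"
    by (auto intro!: eval_PE eval_cst eval_Suc1 eval_Zero)
  then show ?case using Suc unfolding Gnum_def by (auto intro: eval_PrimS)
qed

lemma computable_red: "computable (\<lambda>x. enc_instance (Prog r x, FFalse))"
proof -
  define K where "K = list_encode (map enc_rule (Drules @ [constr r]))"
  define R where "R = PE (Comp Succ [PE (PE (PE (cst 4) (Comp Succ [PE Gnum (cst 0)])) (cst 0)) (cst K)])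
      (cst (prod_encode (2, 0)))"
  have "eval R [x] (enc_instance (Prog r x, FFalse))" for x
    unfolding R_def enc_instance_def Prog_def enc_program_def K_def
    by (auto intro!: eval_PE eval_cst eval_Suc1 eval_Gnum eval_Zero)
  then show ?thesis unfolding computable_def by blast
qed

section \<open>Herbrand universe\<close>

lemma sig_sup: "r \<in> set P \<Longrightarrow> fn \<in> rule_funs r \<Longrightarrow> fn \<in> signature P"
  unfolding signature_def Let_def by auto

lemma len_Drules: "length Drules = 13" by (simp add: Drules_def)

lemma sig_facts:
  "(0,0) \<in> rule_funs (Drules ! 0)"
  "(11,1) \<in> rule_funs (Drules ! 1)"
  "(2,0) \<in> rule_funs (Drules ! 0)"
  "(3,2) \<in> rule_funs (Drules ! 1)"
  "(4,0) \<in> rule_funs (Drules ! 0)"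
  "(5,0) \<in> rule_funs (Drules ! 1)"
  "(6,1) \<in> rule_funs (Drules ! 2)"
  "(7,2) \<in> rule_funs (Drules ! 5)"
  "(8,2) \<in> rule_funs (Drules ! 8)"
  "(9,1) \<in> rule_funs (Drules ! 10)"
  "(10,3) \<in> rule_funs (Drules ! 5)"
  by (simp_all add: Drules_def)

lemma sig_D: "fn \<in> {(0,0),(11,1),(2,0),(3,2),(4,0),(5,0),(6,1),(7,2),(8,2),(9,1),(10,3)} \<Longrightarrow>
   \<exists>k\<in>{0,1,2,5,8,10}. fn \<in> rule_funs (Drules ! k)"
  apply (elim insertE emptyE)
  subgoal by (hypsubst, rule bexI[where x=0]) (rule sig_facts(1), simp)
  subgoal by (hypsubst, rule bexI[where x=1]) (rule sig_facts(2), simp)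
  subgoal by (hypsubst, rule bexI[where x=0]) (rule sig_facts(3), simp)
  subgoal by (hypsubst, rule bexI[where x=1]) (rule sig_facts(4), simp)
  subgoal by (hypsubst, rule bexI[where x=0]) (rule sig_facts(5), simp)
  subgoal by (hypsubst, rule bexI[where x=1]) (rule sig_facts(6), simp)
  subgoal by (hypsubst, rule bexI[where x=2]) (rule sig_facts(7), simp)
  subgoal by (hypsubst, rule bexI[where x=5]) (rule sig_facts(8), simp)
  subgoal by (hypsubst, rule bexI[where x=8]) (rule sig_facts(9), simp)
  subgoal by (hypsubst, rule bexI[where x=10]) (rule sig_facts(10), simp)
  subgoal by (hypsubst, rule bexI[where x=5]) (rule sig_facts(11), simp)
  done

lemma sig_Prog: "fn \<in> {(0,0),(11,1),(2,0),(3,2),(4,0),(5,0),(6,1),(7,2),(8,2),(9,1),(10,3)}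
   \<Longrightarrow> fn \<in> signature (Prog r x)"
proof -
  assume a: "fn \<in> {(0,0),(11,1),(2,0),(3,2),(4,0),(5,0),(6,1),(7,2),(8,2),(9,1),(10,3)}"
  obtain k where k: "k \<in> {0,1,2,5,8,10}" "fn \<in> rule_funs (Drules ! k)" using sig_D[OF a] by blast
  have "Drules ! k \<in> set Drules" using k(1) len_Drules by (intro nth_mem) auto
  then have "Drules ! k \<in> set (Prog r x)" by (simp add: Prog_def)
  then show ?thesis using k(2) by (rule sig_sup)
qed

abbreviation "HU r x \<equiv> herbrand_universe (Prog r x)"

lemma HU_Fn: "(f, length ts) \<in> {(0,0),(11,1),(2,0),(3,2),(4,0),(5,0),(6,1),(7,2),(8,2),(9,1),(10,3)}
   \<Longrightarrow> (\<forall>t\<in>set ts. t \<in> HU r x) \<Longrightarrow> Fn f ts \<in> HU r x"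
  apply (rule herbrand_universe.intros)
   apply (erule sig_Prog)
  apply assumption
  done

lemma HU_num: "num n \<in> HU r x"
proof (induction n)
  case 0 show ?case by (simp, rule HU_Fn) simp_all
next
  case (Suc n) show ?case by (simp, rule HU_Fn) (simp_all add: Suc.IH)
qed

lemma HU_tlist: "(\<forall>t\<in>set ts. t \<in> HU r x) \<Longrightarrow> tlist ts \<in> HU r x"
proof (induction ts)
  case Nil show ?case by (simp, rule HU_Fn) simp_all
next
  case (Cons t ts) then show ?case by (simp, intro HU_Fn) simp_all
qed

lemma HU_code: "code f \<in> HU r x"
proof (induction f)
  case Zero show ?case by (simp, rule HU_Fn) simp_all
next
  case Succ show ?case by (simp, rule HU_Fn) simp_all
next
  case (Proj i) show ?case by (simp, rule HU_Fn) (simp_all add: HU_num)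
next
  case (Comp f gs) show ?case by (simp, rule HU_Fn) (simp_all add: HU_tlist Comp)
next
  case (Prim f g) show ?case by (simp, rule HU_Fn) (simp_all add: Prim)
next
  case (Mn f) show ?case by (simp, rule HU_Fn) (simp_all add: Mn)
qed

lemma HU_node: "a \<in> HU r x \<Longrightarrow> b \<in> HU r x \<Longrightarrow> c \<in> HU r x \<Longrightarrow> node a b c \<in> HU r x"
  by (rule HU_Fn) simp_all
lemma HU_CONS: "a \<in> HU r x \<Longrightarrow> b \<in> HU r x \<Longrightarrow> CONS a b \<in> HU r x"
  by (rule HU_Fn) simp_all
lemma HU_sT: "a \<in> HU r x \<Longrightarrow> sT a \<in> HU r x"
  by (rule HU_Fn) simp_all
lemma HU_NIL: "NIL \<in> HU r x"
  by (rule HU_Fn) simp_all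
lemma HU_Z0: "Z0 \<in> HU r x"
  by (rule HU_Fn) simp_all

lemmas HU_intros = HU_node HU_CONS HU_sT HU_NIL HU_Z0 HU_num HU_code

lemma HU_ground: "t \<in> herbrand_universe P \<Longrightarrow> ground_term t"
  by (induction rule: herbrand_universe.induct) auto

lemma ground_subst_term: "(\<forall>v. ground_term (\<sigma> v)) \<Longrightarrow> ground_term (subst_term \<sigma> t)"
  by (induction t) auto

lemma ground_subst_atom: "(\<forall>v. ground_term (\<sigma> v)) \<Longrightarrow> ground_atom (subst_atom \<sigma> a)"
  by (cases a) (auto intro: ground_subst_term)

section \<open>Completeness\<close>

definition sg :: "(nat \<times> term) list \<Rightarrow> nat \<Rightarrow> term" where
  "sg l v = (case map_of l v of Some t \<Rightarrow> t | None \<Rightarrow> Z0)"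

lemma sg_HU: "(\<forall>p\<in>set l. snd p \<in> HU r x) \<Longrightarrow> sg l v \<in> HU r x"
  unfolding sg_def by (auto split: option.split dest!: map_of_SomeD intro: HU_Z0)

definition posb :: "lit list \<Rightarrow> atom list" where
  "posb b = [a. Pos a \<leftarrow> b]"

definition HR :: "recf \<Rightarrow> nat \<Rightarrow> (atom \<times> atom list) set \<Rightarrow> bool" where
  "HR r x R \<longleftrightarrow> (\<forall>\<sigma> ru. ru \<in> set Drules \<longrightarrow> (\<forall>v. \<sigma> v \<in> HU r x) \<longrightarrow>
      (subst_atom \<sigma> (head ru), posb (map (subst_lit \<sigma>) (body ru))) \<in> R)"

lemma fire:
  assumes "HR r x R" "Rule h b \<in> set Drules" "\<forall>p\<in>set l. snd p \<in> HU r x"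
    "\<forall>a\<in>set (posb (map (subst_lit (sg l)) b)). a \<in> least_model R"
  shows "subst_atom (sg l) h \<in> least_model R"
proof -
  have "(subst_atom (sg l) h, posb (map (subst_lit (sg l)) b)) \<in> R"
  proof -
    have "(subst_atom (sg l) (head (Rule h b)), posb (map (subst_lit (sg l)) (body (Rule h b)))) \<in> R"
      by (rule assms(1)[unfolded HR_def, rule_format, OF assms(2)]) (rule sg_HU[OF assms(3)])
    then show ?thesis by simp
  qed
  then show ?thesis using assms(4) by (rule least_model.intros)
qed

abbreviation "nl xs \<equiv> tlist (map num xs)"

lemma fire0:
  assumes "HR r x R" "xs \<in> HU r x" 
  shows "ev (Fn 4 []) xs Z0 NIL \<in> least_model R"
  using fire[of r x R "ev (Fn 4 []) (V 2) Z0 NIL" "[]" "[(2,xs)]"] assms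
  by (simp add: Drules_def sg_def posb_def)

lemma fire1:
  assumes "HR r x R" "xs \<in> HU r x" "a \<in> HU r x" 
  shows "ev (Fn 5 []) (CONS a xs) (sT a) NIL \<in> least_model R"
  using fire[of r x R "ev (Fn 5 []) (CONS (V 10) (V 2)) (sT (V 10)) NIL" "[]" "[(2,xs), (10,a)]"] assms
  by (simp add: Drules_def sg_def posb_def)

lemma fire2:
  assumes "HR r x R" "xs \<in> HU r x" "i \<in> HU r x" "v \<in> HU r x" "nth3 i xs v \<in> least_model R"
  shows "ev (Fn 6 [i]) xs v NIL \<in> least_model R"
  using fire[of r x R "ev (Fn 6 [V 9]) (V 2) (V 13) NIL" "[Pos (nth3 (V 9) (V 2) (V 13))]" "[(2,xs), (9,i), (13,v)]"] assms
  by (simp add: Drules_def sg_def posb_def)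

lemma fire3:
  assumes "HR r x R" "xs \<in> HU r x" "a \<in> HU r x" 
  shows "nth3 Z0 (CONS a xs) a \<in> least_model R"
  using fire[of r x R "nth3 Z0 (CONS (V 10) (V 2)) (V 10)" "[]" "[(2,xs), (10,a)]"] assms
  by (simp add: Drules_def sg_def posb_def)

lemma fire4:
  assumes "HR r x R" "xs \<in> HU r x" "i \<in> HU r x" "a \<in> HU r x" "v \<in> HU r x" "nth3 i xs v \<in> least_model R"
  shows "nth3 (sT i) (CONS a xs) v \<in> least_model R"
  using fire[of r x R "nth3 (sT (V 9)) (CONS (V 10) (V 2)) (V 13)" "[Pos (nth3 (V 9) (V 2) (V 13))]" "[(2,xs), (9,i), (10,a), (13,v)]"] assms
  by (simp add: Drules_def sg_def posb_def)

lemma fire5: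
  assumes "HR r x R" "f \<in> HU r x" "xs \<in> HU r x" "z \<in> HU r x" "w1 \<in> HU r x" "w2 \<in> HU r x" "gs \<in> HU r x" "ys \<in> HU r x" "evs gs xs ys w1 \<in> least_model R" "ev f ys z w2 \<in> least_model R"
  shows "ev (Fn 7 [f, gs]) xs z (node ys w1 w2) \<in> least_model R"
  using fire[of r x R "ev (Fn 7 [V 0, V 11]) (V 2) (V 4) (node (V 12) (V 6) (V 7))" "[Pos (evs (V 11) (V 2) (V 12) (V 6)), Pos (ev (V 0) (V 12) (V 4) (V 7))]" "[(0,f), (2,xs), (4,z), (6,w1), (7,w2), (11,gs), (12,ys)]"] assms
  by (simp add: Drules_def sg_def posb_def)

lemma fire6:
  assumes "HR r x R" "xs \<in> HU r x" 
  shows "evs NIL xs NIL NIL \<in> least_model R"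
  using fire[of r x R "evs NIL (V 2) NIL NIL" "[]" "[(2,xs)]"] assms
  by (simp add: Drules_def sg_def posb_def)

lemma fire7:
  assumes "HR r x R" "g \<in> HU r x" "xs \<in> HU r x" "y \<in> HU r x" "w1 \<in> HU r x" "w2 \<in> HU r x" "gs \<in> HU r x" "ys \<in> HU r x" "ev g xs y w1 \<in> least_model R" "evs gs xs ys w2 \<in> least_model R"
  shows "evs (CONS g gs) xs (CONS y ys) (node w1 w2 NIL) \<in> least_model R"
  using fire[of r x R "evs (CONS (V 1) (V 11)) (V 2) (CONS (V 3) (V 12)) (node (V 6) (V 7) NIL)" "[Pos (ev (V 1) (V 2) (V 3) (V 6)), Pos (evs (V 11) (V 2) (V 12) (V 7))]" "[(1,g), (2,xs), (3,y), (6,w1), (7,w2), (11,gs), (12,ys)]"] assms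
  by (simp add: Drules_def sg_def posb_def)

lemma fire8:
  assumes "HR r x R" "f \<in> HU r x" "g \<in> HU r x" "xs \<in> HU r x" "y \<in> HU r x" "w \<in> HU r x" "ev f xs y w \<in> least_model R"
  shows "ev (Fn 8 [f, g]) (CONS Z0 xs) y w \<in> least_model R"
  using fire[of r x R "ev (Fn 8 [V 0, V 1]) (CONS Z0 (V 2)) (V 3) (V 5)" "[Pos (ev (V 0) (V 2) (V 3) (V 5))]" "[(0,f), (1,g), (2,xs), (3,y), (5,w)]"] assms
  by (simp add: Drules_def sg_def posb_def)

lemma fire9:
  assumes "HR r x R" "f \<in> HU r x" "g \<in> HU r x" "xs \<in> HU r x" "y \<in> HU r x" "z \<in> HU r x" "w1 \<in> HU r x" "w2 \<in> HU r x" "n \<in> HU r x" "ev (Fn 8 [f, g]) (CONS n xs) y w1 \<in> least_model R" "ev g (CONS n (CONS y xs)) z w2 \<in> least_model R"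
  shows "ev (Fn 8 [f, g]) (CONS (sT n) xs) z (node (CONS n xs) (CONS n (CONS y xs)) (node w1 w2 NIL)) \<in> least_model R"
  using fire[of r x R "ev (Fn 8 [V 0, V 1]) (CONS (sT (V 8)) (V 2)) (V 4) (node (CONS (V 8) (V 2)) (CONS (V 8) (CONS (V 3) (V 2))) (node (V 6) (V 7) NIL))" "[Pos (ev (Fn 8 [V 0, V 1]) (CONS (V 8) (V 2)) (V 3) (V 6)), Pos (ev (V 1) (CONS (V 8) (CONS (V 3) (V 2))) (V 4) (V 7))]" "[(0,f), (1,g), (2,xs), (3,y), (4,z), (6,w1), (7,w2), (8,n)]"] assms
  by (simp add: Drules_def sg_def posb_def)

lemma fire10:
  assumes "HR r x R" "f \<in> HU r x" "xs \<in> HU r x" "y \<in> HU r x" "w1 \<in> HU r x" "w2 \<in> HU r x" "ev f (CONS y xs) Z0 w1 \<in> least_model R" "below f xs y w2 \<in> least_model R"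
  shows "ev (Fn 9 [f]) xs y (node (CONS y xs) Z0 (node w1 w2 NIL)) \<in> least_model R"
  using fire[of r x R "ev (Fn 9 [V 0]) (V 2) (V 3) (node (CONS (V 3) (V 2)) Z0 (node (V 6) (V 7) NIL))" "[Pos (ev (V 0) (CONS (V 3) (V 2)) Z0 (V 6)), Pos (below (V 0) (V 2) (V 3) (V 7))]" "[(0,f), (2,xs), (3,y), (6,w1), (7,w2)]"] assms
  by (simp add: Drules_def sg_def posb_def)

lemma fire11:
  assumes "HR r x R" "f \<in> HU r x" "xs \<in> HU r x" 
  shows "below f xs Z0 NIL \<in> least_model R"
  using fire[of r x R "below (V 0) (V 2) Z0 NIL" "[]" "[(0,f), (2,xs)]"] assms
  by (simp add: Drules_def sg_def posb_def)

lemma fire12: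
  assumes "HR r x R" "f \<in> HU r x" "xs \<in> HU r x" "w1 \<in> HU r x" "w2 \<in> HU r x" "n \<in> HU r x" "v \<in> HU r x" "below f xs n w1 \<in> least_model R" "ev f (CONS n xs) (sT v) w2 \<in> least_model R"
  shows "below f xs (sT n) (node (CONS n xs) (sT v) (node w1 w2 NIL)) \<in> least_model R"
  using fire[of r x R "below (V 0) (V 2) (sT (V 8)) (node (CONS (V 8) (V 2)) (sT (V 13)) (node (V 6) (V 7) NIL))" "[Pos (below (V 0) (V 2) (V 8) (V 6)), Pos (ev (V 0) (CONS (V 8) (V 2)) (sT (V 13)) (V 7))]" "[(0,f), (2,xs), (6,w1), (7,w2), (8,n), (13,v)]"] assms
  by (simp add: Drules_def sg_def posb_def)


lemmas HUi = HU_node HU_CONS HU_sT HU_NIL HU_Z0 HU_num HU_code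

lemma HU_nl: "nl xs \<in> HU r x"
  by (rule HU_tlist) (auto intro: HU_num)

lemma HU_cl: "tlist (map code gs) \<in> HU r x"
  by (rule HU_tlist) (auto intro: HU_code)

lemmas HUi2 = HUi HU_nl HU_cl

lemma comp_nth: "HR r x R \<Longrightarrow> i < length xs \<Longrightarrow> nth3 (num i) (nl xs) (num (xs ! i)) \<in> least_model R"
proof (induction xs arbitrary: i)
  case Nil then show ?case by simp
next
  case (Cons a xs)
  show ?case
  proof (cases i)
    case 0
    have "nth3 Z0 (CONS (num a) (nl xs)) (num a) \<in> least_model R"
      by (rule fire3[OF Cons.prems(1)]) (auto intro: HUi2)
    then show ?thesis using 0 by simp
  next
    case (Suc j)
    then have "nth3 (num j) (nl xs) (num (xs ! j)) \<in> least_model R" using Cons by simp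
    then have "nth3 (sT (num j)) (CONS (num a) (nl xs)) (num (xs ! j)) \<in> least_model R"
      by (intro fire4[OF Cons.prems(1)]) (auto intro: HUi2)
    then show ?thesis using Suc by simp
  qed
qed


lemma comp_evs:
  assumes "HR r x R"
  shows "list_all2 (\<lambda>g y. eval g xs y \<and> (\<exists>W\<in>HU r x. ev (code g) (nl xs) (num y) W \<in> least_model R)) gs ys
    \<Longrightarrow> \<exists>W\<in>HU r x. evs (tlist (map code gs)) (nl xs) (nl ys) W \<in> least_model R"
proof (induction rule: list_all2_induct)
  case Nil
  note fs = this
  show ?case by (simp only: list.map tlist.simps code.simps num.simps, rule bexI[of _ NIL], rule fire6[OF assms]) (use fs in \<open>auto intro: HUi2\<close>)
next
  case (Cons g gs y ys)
  then obtain W1 W2 where "W1 \<in> HU r x" "W2 \<in> HU r x" "ev (code g) (nl xs) (num y) W1 \<in> least_model R"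
    "evs (tlist (map code gs)) (nl xs) (nl ys) W2 \<in> least_model R" by blast
  note fs = this
  show ?case by (simp only: list.map tlist.simps code.simps num.simps, rule bexI[of _ "node W1 W2 NIL"], rule fire7[OF assms]) (use fs in \<open>auto intro: HUi2\<close>)
qed

lemma comp_below:
  assumes "HR r x R"
  shows "(\<forall>z<y. \<exists>v. (eval f (z # xs) v \<and> (\<exists>W\<in>HU r x. ev (code f) (nl (z # xs)) (num v) W \<in> least_model R)) \<and> 0 < v)
    \<Longrightarrow> \<exists>W\<in>HU r x. below (code f) (nl xs) (num y) W \<in> least_model R"
proof (induction y)
  case 0
  note fs = this
  show ?case by (simp only: list.map tlist.simps code.simps num.simps, rule bexI[of _ NIL], rule fire11[OF assms]) (use fs in \<open>auto intro: HUi2\<close>)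
next
  case (Suc y)
  then obtain W1 where W1: "W1 \<in> HU r x" "below (code f) (nl xs) (num y) W1 \<in> least_model R" by auto
  from Suc.prems obtain v W2 where "W2 \<in> HU r x" "ev (code f) (nl (y # xs)) (num v) W2 \<in> least_model R" "0 < v"
    by blast
  then obtain v' where "W2 \<in> HU r x" "ev (code f) (nl (y # xs)) (sT (num v')) W2 \<in> least_model R"
    by (cases v) auto
  note fs = this W1
  show ?case by (simp only: list.map tlist.simps code.simps num.simps, rule bexI[of _ "node (CONS (num y) (nl xs)) (sT (num v')) (node W1 W2 NIL)"], rule fire12[OF assms]) (use fs in \<open>auto intro: HUi2\<close>)
qed

lemma comp_eval:
  assumes "HR r x R"
  shows "eval f xs y \<Longrightarrow> \<exists>W\<in>HU r x. ev (code f) (nl xs) (num y) W \<in> least_model R"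
proof (induction rule: eval.induct)
  case (eval_Zero xs)
  note fs = this
  show ?case by (simp only: list.map tlist.simps code.simps num.simps, rule bexI[of _ NIL], rule fire0[OF assms]) (use fs in \<open>auto intro: HUi2\<close>)
next
  case (eval_Succ a xs)
  note fs = this
  show ?case by (simp only: list.map tlist.simps code.simps num.simps, rule bexI[of _ NIL], rule fire1[OF assms]) (use fs in \<open>auto intro: HUi2\<close>)
next
  case (eval_Proj i xs)
  note fs = this
  show ?case by (simp only: list.map tlist.simps code.simps num.simps, rule bexI[of _ NIL], rule fire2[OF assms]) (use fs in \<open>auto intro: HUi2 comp_nth[OF assms]\<close>)
next
  case (eval_Comp xs gs ys f z)
  from comp_evs[OF assms eval_Comp(1)] obtain W1 where "W1 \<in> HU r x" "evs (tlist (map code gs)) (nl xs) (nl ys) W1 \<in> least_model R" by blast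
  moreover obtain W2 where "W2 \<in> HU r x" "ev (code f) (nl ys) (num z) W2 \<in> least_model R" using eval_Comp by blast
  note fs = calculation this
  show ?case by (simp only: list.map tlist.simps code.simps num.simps, rule bexI[of _ "node (nl ys) W1 W2"], rule fire5[OF assms]) (use fs in \<open>auto intro: HUi2\<close>)
next
  case (eval_Prim0 f xs y g)
  then obtain W where "W \<in> HU r x" "ev (code f) (nl xs) (num y) W \<in> least_model R" by blast
  note fs = this
  show ?case by (simp only: list.map tlist.simps code.simps num.simps, rule bexI[of _ W], rule fire8[OF assms]) (use fs in \<open>auto intro: HUi2\<close>)
next
  case (eval_PrimS f g n xs y z)
  obtain W1 where "W1 \<in> HU r x" "ev (code (Prim f g)) (nl (n # xs)) (num y) W1 \<in> least_model R" using eval_PrimS by blast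
  moreover obtain W2 where "W2 \<in> HU r x" "ev (code g) (nl (n # y # xs)) (num z) W2 \<in> least_model R" using eval_PrimS by blast
  note fs = calculation this
  show ?case by (simp only: list.map tlist.simps code.simps num.simps, rule bexI[of _ "node (CONS (num n) (nl xs)) (CONS (num n) (CONS (num y) (nl xs))) (node W1 W2 NIL)"], rule fire9[OF assms]) (use fs in \<open>auto intro: HUi2\<close>)
next
  case (eval_Mn f y xs)
  obtain W1 where "W1 \<in> HU r x" "ev (code f) (nl (y # xs)) (num 0) W1 \<in> least_model R" using eval_Mn by blast
  moreover obtain W2 where "W2 \<in> HU r x" "below (code f) (nl xs) (num y) W2 \<in> least_model R"
    using comp_below[OF assms] eval_Mn by blast
  note fs = calculation this
  show ?case by (simp only: list.map tlist.simps code.simps num.simps, rule bexI[of _ "node (CONS (num y) (nl xs)) Z0 (node W1 W2 NIL)"], rule fire10[OF assms]) (use fs in \<open>auto intro: HUi2\<close>)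
qed

section \<open>Soundness\<close>

definition Inv :: "recf \<Rightarrow> nat \<Rightarrow> atom \<Rightarrow> bool" where
 "Inv r x A \<longleftrightarrow>
 (\<forall>a b c d. A = ev a b c d \<longrightarrow> (\<forall>f xs. a = code f \<longrightarrow> b = nl xs \<longrightarrow> (\<exists>y. c = num y \<and> eval f xs y))) \<and>
 (\<forall>a b c d. A = evs a b c d \<longrightarrow> (\<forall>gs xs. a = tlist (map code gs) \<longrightarrow> b = nl xs \<longrightarrow>
     (\<exists>ys. c = nl ys \<and> list_all2 (\<lambda>g y. eval g xs y) gs ys))) \<and>
 (\<forall>a b c. A = nth3 a b c \<longrightarrow> (\<forall>i xs. a = num i \<longrightarrow> b = nl xs \<longrightarrow> i < length xs \<and> c = num (xs ! i))) \<and>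
 (\<forall>a b c d. A = below a b c d \<longrightarrow> (\<forall>f xs. a = code f \<longrightarrow> b = nl xs \<longrightarrow>
     (\<exists>y. c = num y \<and> (\<forall>z<y. \<exists>v. eval f (z # xs) v \<and> 0 < v)))) \<and>
 (\<forall>a. A = start a \<longrightarrow> a = num x) \<and>
 (\<forall>a b c d. A = pk a b c d \<longrightarrow> (\<exists>y. eval r [x] y))"

lemma Inv_ev: "Inv r x (ev a b c d) \<longleftrightarrow> (\<forall>f xs. a = code f \<longrightarrow> b = nl xs \<longrightarrow> (\<exists>y. c = num y \<and> eval f xs y))"
  unfolding Inv_def by simp
lemma Inv_evs: "Inv r x (evs a b c d) \<longleftrightarrow> (\<forall>gs xs. a = tlist (map code gs) \<longrightarrow> b = nl xs \<longrightarrow>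
     (\<exists>ys. c = nl ys \<and> list_all2 (\<lambda>g y. eval g xs y) gs ys))"
  unfolding Inv_def by simp
lemma Inv_nth: "Inv r x (nth3 a b c) \<longleftrightarrow> (\<forall>i xs. a = num i \<longrightarrow> b = nl xs \<longrightarrow> i < length xs \<and> c = num (xs ! i))"
  unfolding Inv_def by simp
lemma Inv_below: "Inv r x (below a b c d) \<longleftrightarrow> (\<forall>f xs. a = code f \<longrightarrow> b = nl xs \<longrightarrow>
     (\<exists>y. c = num y \<and> (\<forall>z<y. \<exists>v. eval f (z # xs) v \<and> 0 < v)))"
  unfolding Inv_def by simp
lemma Inv_start: "Inv r x (start a) \<longleftrightarrow> a = num x"
  unfolding Inv_def by simp
lemma Inv_pk: "Inv r x (pk a b c d) \<longleftrightarrow> (\<exists>y. eval r [x] y)"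
  unfolding Inv_def by simp

lemmas Inv_simps = Inv_ev Inv_evs Inv_nth Inv_below Inv_start Inv_pk

lemma code_inv:
  "(code f = Fn 4 []) = (f = Zero)"
  "(code f = Fn 5 []) = (f = Succ)"
  "(code f = Fn 6 [a]) = (\<exists>i. f = Proj i \<and> a = num i)"
  "(code f = Fn 7 [a, b]) = (\<exists>g gs. f = Comp g gs \<and> a = code g \<and> b = tlist (map code gs))"
  "(code f = Fn 8 [a, b]) = (\<exists>g h. f = Prim g h \<and> a = code g \<and> b = code h)"
  "(code f = Fn 9 [a]) = (\<exists>g. f = Mn g \<and> a = code g)"
  by (cases f; auto)+

lemma code_inv':
  "(Fn 4 [] = code f) = (f = Zero)"
  "(Fn 5 [] = code f) = (f = Succ)"
  "(Fn 6 [a] = code f) = (\<exists>i. f = Proj i \<and> a = num i)"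
  "(Fn 7 [a, b] = code f) = (\<exists>g gs. f = Comp g gs \<and> a = code g \<and> b = tlist (map code gs))"
  "(Fn 8 [a, b] = code f) = (\<exists>g h. f = Prim g h \<and> a = code g \<and> b = code h)"
  "(Fn 9 [a] = code f) = (\<exists>g. f = Mn g \<and> a = code g)"
  by (cases f; auto)+

lemma num_inv:
  "(num n = Fn 0 []) = (n = 0)" "(Fn 0 [] = num n) = (n = 0)"
  "(num n = Fn 11 [a]) = (\<exists>m. n = Suc m \<and> a = num m)"
  "(Fn 11 [a] = num n) = (\<exists>m. n = Suc m \<and> a = num m)"
  by (cases n; auto)+

lemma num_inj: "(num a = num b) = (a = b)"
proof (induction a arbitrary: b)
  case 0 then show ?case by (cases b) auto
next
  case (Suc a) then show ?case by (cases b) auto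
qed

lemma tl_inv:
  "(tlist (map h xs) = Fn 2 []) = (xs = [])" "(Fn 2 [] = tlist (map h xs)) = (xs = [])"
  "(tlist (map h xs) = Fn 3 [a, b]) = (\<exists>y ys. xs = y # ys \<and> a = h y \<and> b = tlist (map h ys))"
  "(Fn 3 [a, b] = tlist (map h xs)) = (\<exists>y ys. xs = y # ys \<and> a = h y \<and> b = tlist (map h ys))"
  by (cases xs; auto)+

lemma nl_inj: "(nl a = nl b) = (a = b)"
proof (induction a arbitrary: b)
  case Nil then show ?case by (cases b) auto
next
  case (Cons x a) then show ?case by (cases b) (auto simp: num_inj)
qed

lemma tlist_map_inj: "(\<forall>g\<in>set gs. \<forall>g'. h g = h g' \<longrightarrow> g = g') \<Longrightarrow>
  tlist (map h gs) = tlist (map h gs') \<Longrightarrow> gs = gs'"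
proof (induction gs arbitrary: gs')
  case Nil then show ?case by (cases gs') auto
next
  case (Cons a gs) then show ?case by (cases gs') auto
qed

lemma code_inj: "(code f = code g) = (f = g)"
proof (induction f arbitrary: g)
  case (Comp f gs) then show ?case
    by (cases g) (auto dest: tlist_map_inj[rotated])
qed (case_tac g; auto simp: num_inj)+

lemma cl_inj: "(tlist (map code a) = tlist (map code b)) = (a = b)"
  using tlist_map_inj[of a code b] code_inj by auto

lemmas inv_simps = code_inv code_inv' num_inv tl_inv num_inj nl_inj code_inj cl_inj

lemma sound0:
  shows "Inv r x (ev (Fn 4 []) xs Z0 NIL)"
  by (auto simp: Inv_simps inv_simps; metis eval.intros)

lemma sound1:
  shows "Inv r x (ev (Fn 5 []) (CONS a xs) (sT a) NIL)"
  by (auto simp: Inv_simps inv_simps; metis eval.intros)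

lemma sound2:
  assumes "Inv r x (nth3 i xs v)"
  shows "Inv r x (ev (Fn 6 [i]) xs v NIL)"
  using assms by (auto simp: Inv_simps inv_simps; metis eval.intros)

lemma sound3:
  shows "Inv r x (nth3 Z0 (CONS a xs) a)"
  by (auto simp: Inv_simps inv_simps; metis eval.intros)

lemma sound4:
  assumes "Inv r x (nth3 i xs v)"
  shows "Inv r x (nth3 (sT i) (CONS a xs) v)"
  using assms by (auto simp: Inv_simps inv_simps; metis eval.intros)

lemma sound5:
  assumes "Inv r x (evs gs xs ys w1)" "Inv r x (ev f ys z w2)"
  shows "Inv r x (ev (Fn 7 [f, gs]) xs z (node ys w1 w2))"
  using assms by (auto simp: Inv_simps inv_simps; metis eval.intros)

lemma sound6:
  shows "Inv r x (evs NIL xs NIL NIL)"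
  by (auto simp: Inv_simps inv_simps; metis eval.intros)

lemma sound7:
  assumes "Inv r x (ev g xs y w1)" "Inv r x (evs gs xs ys w2)"
  shows "Inv r x (evs (CONS g gs) xs (CONS y ys) (node w1 w2 NIL))"
  using assms by (auto simp: Inv_simps inv_simps; metis eval.intros)

lemma sound8:
  assumes "Inv r x (ev f xs y w)"
  shows "Inv r x (ev (Fn 8 [f, g]) (CONS Z0 xs) y w)"
  using assms by (auto simp: Inv_simps inv_simps; metis eval.intros)

lemma sound9:
  assumes "Inv r x (ev (Fn 8 [f, g]) (CONS n xs) y w1)" "Inv r x (ev g (CONS n (CONS y xs)) z w2)"
  shows "Inv r x (ev (Fn 8 [f, g]) (CONS (sT n) xs) z (node (CONS n xs) (CONS n (CONS y xs)) (node w1 w2 NIL)))"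
  using assms by (auto simp: Inv_simps inv_simps; metis eval.intros)

lemma sound10:
  assumes A1: "Inv r x (ev f (CONS y xs) Z0 w1)" and A2: "Inv r x (below f xs y w2)"
  shows "Inv r x (ev (Fn 9 [f]) xs y (node (CONS y xs) Z0 (node w1 w2 NIL)))"
  unfolding Inv_ev
proof (intro allI impI)
  fix f' xs' assume h1: "Fn 9 [f] = code f'" and h2: "xs = nl xs'"
  then obtain g where g: "f' = Mn g" "f = code g" by (auto simp: code_inv')
  from A2 g h2 obtain yv where yv: "y = num yv" "\<forall>z<yv. \<exists>v. eval g (z # xs') v \<and> 0 < v"
    unfolding Inv_below by blast
  from A1 g h2 yv have "\<exists>u. Z0 = num u \<and> eval g (yv # xs') u"
    unfolding Inv_ev by simp
  then have "eval g (yv # xs') 0" by (auto simp: num_inv)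
  then show "\<exists>y'. y = num y' \<and> eval f' xs' y'" using yv g by (auto intro: eval_Mn)
qed

lemma sound11:
  shows "Inv r x (below f xs Z0 NIL)"
  by (auto simp: Inv_simps inv_simps; metis eval.intros)

lemma sound12:
  assumes A1: "Inv r x (below f xs n w1)" and A2: "Inv r x (ev f (CONS n xs) (sT v) w2)"
  shows "Inv r x (below f xs (sT n) (node (CONS n xs) (sT v) (node w1 w2 NIL)))"
  unfolding Inv_below
proof (intro allI impI)
  fix f' xs' assume h1: "f = code f'" and h2: "xs = nl xs'"
  from A1 h1 h2 obtain y where y: "n = num y" "\<forall>z<y. \<exists>v. eval f' (z # xs') v \<and> 0 < v"
    unfolding Inv_below by blast
  from A2 h1 h2 y have "\<exists>u. sT v = num u \<and> eval f' (y # xs') u"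
    unfolding Inv_ev by simp
  then obtain u where "eval f' (y # xs') u" "0 < u" by (auto simp: num_inv)
  then have "\<forall>z<Suc y. \<exists>v. eval f' (z # xs') v \<and> 0 < v" using y(2) less_Suc_eq by auto
  then show "\<exists>y'. sT n = num y' \<and> (\<forall>z<y'. \<exists>v. eval f' (z # xs') v \<and> 0 < v)"
    using y(1) by (intro exI[of _ "Suc y"]) simp
qed

lemma subst_num[simp]: "subst_term \<sigma> (num n) = num n"
  by (induction n) auto

lemma subst_tlist[simp]: "subst_term \<sigma> (tlist ts) = tlist (map (subst_term \<sigma>) ts)"
  by (induction ts) auto

lemma subst_code[simp]: "subst_term \<sigma> (code f) = code f"
  by (induction f) (auto cong: map_cong)

lemma sound_fact: "Inv r x (start (num x))"
  by (simp add: Inv_simps)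

lemma sound_constr: "Inv r x (start a) \<Longrightarrow> Inv r x (ev (code r) (CONS a NIL) y w) \<Longrightarrow> Inv r x (pk (code r) (CONS a NIL) y w)"
proof -
  assume s: "Inv r x (start a)" and e: "Inv r x (ev (code r) (CONS a NIL) y w)"
  from s have "a = num x" by (simp add: Inv_simps)
  with e have "\<exists>v. y = num v \<and> eval r [x] v" by (simp add: Inv_simps)
  then show ?thesis by (auto simp: Inv_simps)
qed

lemma sound_D_k:
  assumes "k < 13" "\<forall>b\<in>set (posb (map (subst_lit \<sigma>) (body (Drules ! k)))). Inv r x b"
  shows "Inv r x (subst_atom \<sigma> (head (Drules ! k)))"
proof -
  have "k = 0 \<or> k = 1 \<or> k = 2 \<or> k = 3 \<or> k = 4 \<or> k = 5 \<or> k = 6 \<or> k = 7 \<or> k = 8 \<or> k = 9 \<or> k = 10 \<or> k = 11 \<or> k = 12"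
    using assms(1) by arith
  then show ?thesis
  proof (elim disjE)
    assume "k = 0" then show ?thesis using assms(2) by (auto simp: Drules_def posb_def intro: sound0)
  next
    assume "k = 1" then show ?thesis using assms(2) by (auto simp: Drules_def posb_def intro: sound1)
  next
    assume "k = 2" then show ?thesis using assms(2) by (auto simp: Drules_def posb_def intro: sound2)
  next
    assume "k = 3" then show ?thesis using assms(2) by (auto simp: Drules_def posb_def intro: sound3)
  next
    assume "k = 4" then show ?thesis using assms(2) by (auto simp: Drules_def posb_def intro: sound4)
  next
    assume "k = 5" then show ?thesis using assms(2) by (auto simp: Drules_def posb_def intro: sound5)
  next
    assume "k = 6" then show ?thesis using assms(2) by (auto simp: Drules_def posb_def intro: sound6)
  next
    assume "k = 7" then show ?thesis using assms(2) by (auto simp: Drules_def posb_def intro: sound7)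
  next
    assume "k = 8" then show ?thesis using assms(2) by (auto simp: Drules_def posb_def intro: sound8)
  next
    assume "k = 9" then show ?thesis using assms(2) by (auto simp: Drules_def posb_def intro: sound9)
  next
    assume "k = 10" then show ?thesis using assms(2) by (auto simp: Drules_def posb_def intro: sound10)
  next
    assume "k = 11" then show ?thesis using assms(2) by (auto simp: Drules_def posb_def intro: sound11)
  next
    assume "k = 12" then show ?thesis using assms(2) by (auto simp: Drules_def posb_def intro: sound12)
  qed
qed

lemma sound_rule:
  assumes "ru \<in> set (Prog r x)" "\<forall>b\<in>set (posb (map (subst_lit \<sigma>) (body ru))). Inv r x b"
  shows "Inv r x (subst_atom \<sigma> (head ru))"
proof -
  have "ru = Rule (start (num x)) [] \<or> ru = constr r \<or> ru \<in> set Drules"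
    using assms(1) by (auto simp: Prog_def)
  then show ?thesis
  proof (elim disjE)
    assume "ru = Rule (start (num x)) []" then show ?thesis by (simp add: sound_fact)
  next
    assume "ru = constr r" then show ?thesis using assms(2)
      by (auto simp: constr_def posb_def intro: sound_constr)
  next
    assume "ru \<in> set Drules"
    then obtain k where "k < length Drules" "ru = Drules ! k" by (auto simp: in_set_conv_nth)
    then show ?thesis using sound_D_k[of k \<sigma> r x] assms(2) len_Drules by simp
  qed
qed

definition HS :: "recf \<Rightarrow> nat \<Rightarrow> (atom \<times> atom list) set \<Rightarrow> bool" where
  "HS r x R \<longleftrightarrow> (\<forall>h bs. (h, bs) \<in> R \<longrightarrow> (\<exists>\<sigma> ru. ru \<in> set (Prog r x) \<and> h = subst_atom \<sigma> (head ru)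
      \<and> bs = posb (map (subst_lit \<sigma>) (body ru))))"

lemma soundness: assumes hs: "HS r x R" shows "A \<in> least_model R \<Longrightarrow> Inv r x A"
proof (induction rule: least_model.induct)
  case (1 h bs)
  with hs obtain \<sigma> ru where "ru \<in> set (Prog r x)" "h = subst_atom \<sigma> (head ru)"
      "bs = posb (map (subst_lit \<sigma>) (body ru))" unfolding HS_def by blast
  then show ?case using 1 sound_rule by blast
qed

section \<open>Stable models\<close>

lemma subst_rule_split: "subst_rule \<sigma> ru = Rule (subst_atom \<sigma> (head ru)) (map (subst_lit \<sigma>) (body ru))"
  by (cases ru) auto

lemma HS_reduct: "HS r x (reduct (Prog r x) M)"
  unfolding HS_def
proof (intro allI impI)
  fix h bs assume "(h, bs) \<in> reduct (Prog r x) M"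
  then obtain b where b: "bs = [a. Pos a \<leftarrow> b]" "Rule h b \<in> Ground (Prog r x)"
    unfolding reduct_def by blast
  then obtain \<sigma> ru where ru: "ru \<in> set (Prog r x)" "Rule h b = subst_rule \<sigma> ru"
    unfolding Ground_def by blast
  then have "h = subst_atom \<sigma> (head ru)" "b = map (subst_lit \<sigma>) (body ru)"
    by (auto simp: subst_rule_split)
  then show "\<exists>\<sigma> ru. ru \<in> set (Prog r x) \<and> h = subst_atom \<sigma> (head ru) \<and> bs = posb (map (subst_lit \<sigma>) (body ru))"
    using ru(1) b(1) unfolding posb_def by blast
qed

lemma Drules_pos: "\<forall>ru\<in>set Drules. (\<forall>l\<in>set (body ru). \<exists>a. l = Pos a)"
  unfolding Drules_def by simp

lemma HR_reduct: "HR r x (reduct (Prog r x) M)"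
  unfolding HR_def
proof (intro allI impI)
  fix \<sigma> :: "nat \<Rightarrow> term" and ru assume ru: "ru \<in> set Drules" and s: "\<forall>v. \<sigma> v \<in> HU r x"
  have g: "Rule (subst_atom \<sigma> (head ru)) (map (subst_lit \<sigma>) (body ru)) \<in> Ground (Prog r x)"
    unfolding Ground_def using ru s by (auto simp: Prog_def subst_rule_split[symmetric])
  have "\<forall>a. Neg a \<in> set (map (subst_lit \<sigma>) (body ru)) \<longrightarrow> a \<notin> M"
  proof (intro allI impI)
    fix a assume "Neg a \<in> set (map (subst_lit \<sigma>) (body ru))"
    then obtain l where "l \<in> set (body ru)" "subst_lit \<sigma> l = Neg a" by auto
    moreover then obtain a' where "l = Pos a'" using Drules_pos ru by blast
    ultimately show "a \<notin> M" by simp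
  qed
  with g show "(subst_atom \<sigma> (head ru), posb (map (subst_lit \<sigma>) (body ru))) \<in> reduct (Prog r x) M"
    unfolding reduct_def posb_def by blast
qed

fun predof :: "atom \<Rightarrow> nat" where "predof (Atom p ts) = p"

lemma predof_subst[simp]: "predof (subst_atom \<sigma> a) = predof a"
  by (cases a) auto

lemma Drules_pred: "\<forall>ru\<in>set Drules. predof (head ru) \<noteq> 5"
  unfolding Drules_def by simp

lemma ground_neg:
  assumes "Rule h b \<in> Ground (Prog r x)"
  shows "(\<forall>a. Neg a \<in> set b \<longrightarrow> a = h \<and> (\<exists>a1 a2 a3 a4. h = pk a1 a2 a3 a4)) \<and> (predof h = 5 \<longrightarrow> Neg h \<in> set b)"
proof -
  obtain \<sigma> ru where ru: "ru \<in> set (Prog r x)" "Rule h b = subst_rule \<sigma> ru"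
    using assms unfolding Ground_def by blast
  then have hb: "h = subst_atom \<sigma> (head ru)" "b = map (subst_lit \<sigma>) (body ru)"
    by (auto simp: subst_rule_split)
  have "ru = Rule (start (num x)) [] \<or> ru = constr r \<or> ru \<in> set Drules"
    using ru(1) by (auto simp: Prog_def)
  then show ?thesis
  proof (elim disjE)
    assume "ru = Rule (start (num x)) []" then show ?thesis using hb by simp
  next
    assume "ru = constr r" then show ?thesis using hb by (auto simp: constr_def)
  next
    assume d: "ru \<in> set Drules"
    have "\<forall>a. Neg a \<notin> set b"
    proof (intro allI notI)
      fix a assume "Neg a \<in> set b"
      then obtain l where "l \<in> set (body ru)" "subst_lit \<sigma> l = Neg a" using hb by auto
      moreover then obtain a' where "l = Pos a'" using Drules_pos d by blast
      ultimately show False by simp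
    qed
    moreover have "predof h \<noteq> 5" using hb Drules_pred d by simp
    ultimately show ?thesis by blast
  qed
qed

lemma lm_ground:
  assumes "A \<in> least_model (reduct (Prog r x) M)" shows "ground_atom A"
proof -
  from assms obtain bs where "(A, bs) \<in> reduct (Prog r x) M" by (cases rule: least_model.cases) auto
  then obtain b where "Rule A b \<in> Ground (Prog r x)" unfolding reduct_def by blast
  then obtain \<sigma> ru where "\<forall>v. \<sigma> v \<in> HU r x" "Rule A b = subst_rule \<sigma> ru"
    unfolding Ground_def by blast
  moreover then have "\<forall>v. ground_term (\<sigma> v)" using HU_ground by blast
  ultimately show ?thesis using ground_subst_atom[of \<sigma>] by (auto simp: subst_rule_split)
qed

lemma not_in_A_model:
  assumes "\<nexists>y. eval r [x] y"
  shows "\<exists>M. stable_model (Prog r x) M"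
proof -
  define M0 where "M0 = least_model (reduct (Prog r x) {})"
  have nopk: "\<forall>A\<in>M0. \<forall>a1 a2 a3 a4. A \<noteq> pk a1 a2 a3 a4"
  proof (intro ballI allI notI)
    fix A a1 a2 a3 a4 assume "A \<in> M0" "A = pk a1 a2 a3 a4"
    then have "Inv r x (pk a1 a2 a3 a4)" unfolding M0_def using soundness[OF HS_reduct] by blast
    then show False using assms by (simp add: Inv_simps)
  qed
  have cond: "\<forall>a. Neg a \<in> set b \<longrightarrow> a \<notin> M0" if "Rule h b \<in> Ground (Prog r x)" for h b
  proof (intro allI impI notI)
    fix a assume "Neg a \<in> set b" "a \<in> M0"
    with ground_neg[OF that] obtain a1 a2 a3 a4 where "a = pk a1 a2 a3 a4" by blast
    with nopk \<open>a \<in> M0\<close> show False by blast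
  qed
  have "reduct (Prog r x) M0 = reduct (Prog r x) {}"
    unfolding reduct_def
  proof (intro Collect_cong iffI)
    fix u assume "\<exists>h b. u = (h, [a. Pos a \<leftarrow> b]) \<and> Rule h b \<in> Ground (Prog r x) \<and> (\<forall>a. Neg a \<in> set b \<longrightarrow> a \<notin> M0)"
    then show "\<exists>h b. u = (h, [a. Pos a \<leftarrow> b]) \<and> Rule h b \<in> Ground (Prog r x) \<and> (\<forall>a. Neg a \<in> set b \<longrightarrow> a \<notin> {})"
      by blast
  next
    fix u assume "\<exists>h b. u = (h, [a. Pos a \<leftarrow> b]) \<and> Rule h b \<in> Ground (Prog r x) \<and> (\<forall>a. Neg a \<in> set b \<longrightarrow> a \<notin> {})"
    then obtain h b where "u = (h, [a. Pos a \<leftarrow> b])" "Rule h b \<in> Ground (Prog r x)" by blast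
    then show "\<exists>h b. u = (h, [a. Pos a \<leftarrow> b]) \<and> Rule h b \<in> Ground (Prog r x) \<and> (\<forall>a. Neg a \<in> set b \<longrightarrow> a \<notin> M0)"
      using cond by blast
  qed
  then have "M0 = least_model (reduct (Prog r x) M0)" unfolding M0_def by simp
  moreover have "\<forall>a\<in>M0. ground_atom a" unfolding M0_def using lm_ground by blast
  ultimately show ?thesis unfolding stable_model_def by blast
qed

lemma in_A_no_model:
  assumes "eval r [x] y"
  shows "\<not> stable_model (Prog r x) M"
proof
  assume st: "stable_model (Prog r x) M"
  let ?R = "reduct (Prog r x) M"
  have MR: "M = least_model ?R" using st unfolding stable_model_def by blast
  obtain W where W: "W \<in> HU r x" "ev (code r) (nl [x]) (num y) W \<in> least_model ?R"
    using comp_eval[OF HR_reduct assms] by blast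
  have fact_g: "Rule (start (num x)) [] \<in> Ground (Prog r x)"
    unfolding Ground_def
    by (rule CollectI, rule exI[of _ "\<lambda>_. Z0"], rule exI[of _ "Rule (start (num x)) []"])
       (auto simp: Prog_def HU_Z0[unfolded Prog_def])
  have "(start (num x), []) \<in> ?R" using fact_g unfolding reduct_def by force
  then have st_in: "start (num x) \<in> least_model ?R" by (rule least_model.intros) simp
  let ?q = "pk (code r) (CONS (num x) NIL) (num y) W"
  let ?\<sigma> = "sg [(10, num x), (3, num y), (5, W)]"
  have "\<forall>v. ?\<sigma> v \<in> HU r x" using W(1) by (intro allI sg_HU) (auto intro: HUi)
  then have cg: "Rule ?q [Pos (start (num x)), Pos (ev (code r) (CONS (num x) NIL) (num y) W), Neg ?q]
      \<in> Ground (Prog r x)"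
    unfolding Ground_def
    by (intro CollectI exI[of _ ?\<sigma>] exI[of _ "constr r"]) (simp add: Prog_def constr_def sg_def)
  show False
  proof (cases "?q \<in> M")
    case True
    then have "?q \<in> least_model ?R" using MR by simp
    then obtain bs where "(?q, bs) \<in> ?R" by (cases rule: least_model.cases) auto
    then obtain b where b: "Rule ?q b \<in> Ground (Prog r x)" "\<forall>a. Neg a \<in> set b \<longrightarrow> a \<notin> M"
      unfolding reduct_def by blast
    from ground_neg[OF b(1)] have "Neg ?q \<in> set b" by simp
    with b(2) True show False by blast
  next
    case False
    have "(?q, [start (num x), ev (code r) (CONS (num x) NIL) (num y) W]) \<in> ?R"
      unfolding reduct_def using cg False
      by (intro CollectI exI[of _ ?q] exI[of _ "[Pos (start (num x)), Pos (ev (code r) (CONS (num x) NIL) (num y) W), Neg ?q]"]) auto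
    then have "?q \<in> least_model ?R" using st_in W(2) by (intro least_model.intros) auto
    with False MR show False by simp
  qed
qed

section \<open>Finitely recursive\<close>

fun subs :: "term \<Rightarrow> term set" where
  "subs (Var v) = {Var v}"
| "subs (Fn f ts) = insert (Fn f ts) (\<Union>t\<in>set ts. subs t)"

lemma finite_subs: "finite (subs t)"
  by (induction t) auto

lemma self_subs: "t \<in> subs t"
  by (cases t) auto

lemma subs_trans: "u \<in> subs t \<Longrightarrow> subs u \<subseteq> subs t"
  by (induction t) auto

lemma subs_subst: "u \<in> subs t \<Longrightarrow> subst_term \<sigma> u \<in> subs (subst_term \<sigma> t)"
proof (induction t)
  case (Var v) then show ?case by (simp add: self_subs)
next
  case (Fn f ts) then show ?case by auto
qed

fun args :: "atom \<Rightarrow> term list" where "args (Atom p ts) = ts"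

lemma args_subst[simp]: "args (subst_atom \<sigma> a) = map (subst_term \<sigma>) (args a)"
  by (cases a) auto

lemma lit_atom_subst[simp]: "lit_atom (subst_lit \<sigma> l) = subst_atom \<sigma> (lit_atom l)"
  by (cases l) auto

definition ok_rule :: "rule \<Rightarrow> bool" where
  "ok_rule ru \<longleftrightarrow> (\<forall>l\<in>set (body ru). (\<forall>u\<in>set (args (lit_atom l)). \<exists>t\<in>set (args (head ru)). u \<in> subs t)
     \<and> predof (lit_atom l) \<le> 6 \<and> length (args (lit_atom l)) \<le> 4)"

lemma ok_Drules: "\<forall>ru\<in>set Drules. ok_rule ru"
  unfolding Drules_def ok_rule_def by simp

lemma ok_Prog: "ru \<in> set (Prog r x) \<Longrightarrow> ok_rule ru"
  using ok_Drules by (auto simp: Prog_def constr_def ok_rule_def self_subs)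

lemma edge_prop:
  assumes "(A, B) \<in> dep_edges (Prog r x)"
  shows "(\<forall>u\<in>set (args B). \<exists>t\<in>set (args A). u \<in> subs t) \<and> predof B \<le> 6 \<and> length (args B) \<le> 4"
proof -
  obtain rg l where e: "A = head rg" "B = lit_atom l" "rg \<in> Ground (Prog r x)" "l \<in> set (body rg)"
    using assms unfolding dep_edges_def by blast
  then obtain \<sigma> ru where ru: "ru \<in> set (Prog r x)" "rg = subst_rule \<sigma> ru"
    unfolding Ground_def by blast
  then have hb: "head rg = subst_atom \<sigma> (head ru)" "body rg = map (subst_lit \<sigma>) (body ru)"
    by (auto simp: subst_rule_split)
  then obtain l0 where l0: "l0 \<in> set (body ru)" "l = subst_lit \<sigma> l0" using e(4) by auto
  have ok: "ok_rule ru" using ok_Prog[OF ru(1)] .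
  then have ok1: "\<forall>u\<in>set (args (lit_atom l0)). \<exists>t\<in>set (args (head ru)). u \<in> subs t"
    and ok2: "predof (lit_atom l0) \<le> 6" "length (args (lit_atom l0)) \<le> 4"
    using l0(1) unfolding ok_rule_def by auto
  have "\<forall>u\<in>set (args B). \<exists>t\<in>set (args A). u \<in> subs t"
  proof
    fix u assume "u \<in> set (args B)"
    then obtain u0 where u0: "u0 \<in> set (args (lit_atom l0))" "u = subst_term \<sigma> u0"
      using e(2) l0(2) by auto
    then obtain t0 where "t0 \<in> set (args (head ru))" "u0 \<in> subs t0" using ok1 by blast
    then show "\<exists>t\<in>set (args A). u \<in> subs t"
      using u0(2) e(1) hb(1) subs_subst by auto
  qed
  then show ?thesis using ok2 e(2) l0(2) by simp
qed

lemma fin_rec: "finitely_recursive (Prog r x)"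
  unfolding finitely_recursive_def
proof (intro allI impI)
  fix A :: atom
  define S where "S = (\<Union>t\<in>set (args A). subs t)"
  have finS: "finite S" unfolding S_def by (auto simp: finite_subs)
  have reach: "set (args B) \<subseteq> S \<and> (B = A \<or> (predof B \<le> 6 \<and> length (args B) \<le> 4))"
    if "(A, B) \<in> (dep_edges (Prog r x))\<^sup>*" for B
    using that
  proof (induction rule: rtrancl_induct)
    case base then show ?case unfolding S_def using self_subs by auto
  next
    case (step B C)
    have "set (args C) \<subseteq> S"
    proof
      fix u assume "u \<in> set (args C)"
      then obtain t where "t \<in> set (args B)" "u \<in> subs t" using edge_prop[OF step(2)] by blast
      moreover then have "t \<in> S" using step(3) by blast
      ultimately show "u \<in> S" unfolding S_def using subs_trans by blast
    qed
    then show ?case using edge_prop[OF step(2)] by blast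
  qed
  have "{B. (A, B) \<in> (dep_edges (Prog r x))\<^sup>*} \<subseteq>
      insert A ((\<lambda>(p, ts). Atom p ts) ` ({..6} \<times> {ts. set ts \<subseteq> S \<and> length ts \<le> 4}))"
  proof
    fix B assume "B \<in> {B. (A, B) \<in> (dep_edges (Prog r x))\<^sup>*}"
    then have rb: "set (args B) \<subseteq> S \<and> (B = A \<or> (predof B \<le> 6 \<and> length (args B) \<le> 4))" using reach by blast
    obtain p ts where B: "B = Atom p ts" by (cases B)
    show "B \<in> insert A ((\<lambda>(p, ts). Atom p ts) ` ({..6} \<times> {ts. set ts \<subseteq> S \<and> length ts \<le> 4}))"
      using rb B by (auto intro!: image_eqI[of _ _ "(p, ts)"])
  qed
  moreover have "finite (insert A ((\<lambda>(p, ts). Atom p ts) ` ({..6} \<times> {ts. set ts \<subseteq> S \<and> length ts \<le> 4})))"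
    using finite_lists_length_le[OF finS] by auto
  ultimately show "finite {B. (A, B) \<in> (dep_edges (Prog r x))\<^sup>*}" by (rule finite_subset)
qed

theorem theorem5p5:
  shows "\<forall>A. rec_enum A \<longrightarrow> many_one_reducible A SkepFR"
proof (intro allI impI)
  fix A assume "rec_enum A"
  then obtain r where r: "\<forall>x. x \<in> A \<longleftrightarrow> (\<exists>y. eval r [x] y)" unfolding rec_enum_def by blast
  define f where "f = (\<lambda>x. (Prog r x, FFalse))"
  have c: "computable (enc_instance \<circ> f)"
    using computable_red[of r] unfolding f_def comp_def .
  have "x \<in> A \<longleftrightarrow> f x \<in> SkepFR" for x
  proof
    assume "x \<in> A"
    then obtain y where "eval r [x] y" using r by blast
    then have "skeptically_entails (Prog r x) FFalse"
      unfolding skeptically_entails_def using in_A_no_model by blast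
    then show "f x \<in> SkepFR" unfolding f_def SkepFR_def ground_fmla_def using fin_rec by simp
  next
    assume "f x \<in> SkepFR"
    then have "skeptically_entails (Prog r x) FFalse" unfolding f_def SkepFR_def by simp
    show "x \<in> A"
    proof (rule ccontr)
      assume "x \<notin> A"
      then have "\<nexists>y. eval r [x] y" using r by blast
      then obtain M where "stable_model (Prog r x) M" using not_in_A_model by blast
      with \<open>skeptically_entails (Prog r x) FFalse\<close> show False
        unfolding skeptically_entails_def by fastforce
    qed
  qed
  with c show "many_one_reducible A SkepFR" unfolding many_one_reducible_def by blast
qed

end
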